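(* Let $\bm X\in\mathbb{IR}^n$ and let $(g^{\rm u},g^{\rm o})_{\bm X}$ be a superposition relaxation of $g:\bm X\to\mathbb{R}$ on $\bm X$ with continuous summands $g^{\rm u}_i,g^{\rm o}_i:X_i\to\mathbb{R}$. Let $\mathcal P^{\rm u}=\{i:\operatorname{wid}(g^{\rm u}_i(X_i))>0\}$ and $\mathcal P^{\rm o}=\{i:\operatorname{wid}(g^{\rm o}_i(X_i))>0\}$, and assume both are nonempty. Let $\varphi:Z\to\mathbb{R}$ be defined on an interval $Z\supseteq[\underline g^{\rm u}(\bm X),\overline g^{\rm o}(\bm X)]$, convex and monotonic. Set $\theta^{\rm u}_i=\operatorname{wid}(g^{\rm u}_i(X_i))/\operatorname{wid}(g^{\rm u}(\bm X))$ and $\theta^{\rm o}_i=\operatorname{wid}(g^{\rm o}_i(X_i))/\operatorname{wid}(g^{\rm o}(\bm X))$. Then a superposition relaxation $(f^{\rm u},f^{\rm o})_{\bm X}$ of $f=\varphi\circ g$ on $\bm X$ is given by the following summands (all summands not listed being identically zero): • if $\varphi$ is nondecreasing: $f^{\rm u}_i(x_i)=\varphi\big(g^{\rm u}_i(x_i)-\underline g^{\rm u}_i(X_i)+\underline g^{\rm u}(\bm X)\big)-(1-\theta^{\rm u}_i)\varphi\big(\underline g^{\rm u}(\bm X)\big)$ for $i\in\mathcal P^{\rm u}$, and $f^{\rm o}_i(x_i)=\theta^{\rm o}_i\varphi\Big(\frac{g^{\rm o}_i(x_i)-\overline g^{\rm o}_i(X_i)}{\theta^{\rm o}_i}+\overline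 g^{\rm o}(\bm X)\Big)$ for $i\in\mathcal P^{\rm o}$; • if $\varphi$ is nonincreasing: $f^{\rm u}_i(x_i)=\varphi\big(g^{\rm o}_i(x_i)-\overline g^{\rm o}_i(X_i)+\overline g^{\rm o}(\bm X)\big)-(1-\theta^{\rm o}_i)\varphi\big(\overline g^{\rm o}(\bm X)\big)$ for $i\in\mathcal P^{\rm o}$, and $f^{\rm o}_i(x_i)=\theta^{\rm u}_i\varphi\Big(\frac{g^{\rm u}_i(x_i)-\underline g^{\rm u}_i(X_i)}{\theta^{\rm u}_i}+\underline g^{\rm u}(\bm X)\Big)$ for $i\in\mathcal P^{\rm u}$.
   Context: $\mathbb{IR}^n$ is the set of boxes $\bm X=X_1\times\cdots\times X_n$ of compact intervals $X_i$. A superposition relaxation of $g:\bm X\to\mathbb{R}$ on $\bm X$, written $(g^{\rm u},g^{\rm o})_{\bm X}$, is a pair of separable functions $g^{\rm u}(\bm x)=\sum_i g^{\rm u}_i(x_i)$, $g^{\rm o}(\bm x)=\sum_i g^{\rm o}_i(x_i)$ with $g^{\rm u}_i,g^{\rm o}_i:X_i\to\mathbb{R}$ and $g^{\rm u}\le g\le g^{\rm o}$ on $\bm X$. Notation: $\underline g^{\rm u}_i(X_i)=\min_{x_i\in X_i}g^{\rm u}_i(x_i)$, $\overline g^{\rm u}_i(X_i)=\max_{x_i\in X_i}g^{\rm u}_i(x_i)$, $\operatorname{wid}(g^{\rm u}_i(X_i))=\overline g^{\rm u}_i(X_i)-\underline g^{\rm u}_i(X_i)$ (similarly for $g^{\rm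 o}_i$); $\underline g^{\rm u}(\bm X)=\sum_i\underline g^{\rm u}_i(X_i)$, $\overline g^{\rm u}(\bm X)=\sum_i\overline g^{\rm u}_i(X_i)$, $\operatorname{wid}(g^{\rm u}(\bm X))=\overline g^{\rm u}(\bm X)-\underline g^{\rm u}(\bm X)$, and likewise for $g^{\rm o}$. *)

theory Defs
  imports "HOL-Analysis.Analysis"
begin

definition box :: "nat \<Rightarrow> (nat \<Rightarrow> real) \<Rightarrow> (nat \<Rightarrow> real) \<Rightarrow> (nat \<Rightarrow> real) set" where
  "box n lo hi = PiE {..<n} (\<lambda>i. {lo i..hi i})"

definition superposition_relaxation ::
  "nat \<Rightarrow> (nat \<Rightarrow> real) \<Rightarrow> (nat \<Rightarrow> real) \<Rightarrow> ((nat \<Rightarrow> real) \<Rightarrow> real)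
   \<Rightarrow> (nat \<Rightarrow> real \<Rightarrow> real) \<Rightarrow> (nat \<Rightarrow> real \<Rightarrow> real) \<Rightarrow> bool" where
  "superposition_relaxation n lo hi h hu ho \<longleftrightarrow>
     (\<forall>x\<in>box n lo hi. (\<Sum>i<n. hu i (x i)) \<le> h x \<and> h x \<le> (\<Sum>i<n. ho i (x i)))"

definition imin :: "(real \<Rightarrow> real) \<Rightarrow> real \<Rightarrow> real \<Rightarrow> real" where
  "imin h a b = (INF t\<in>{a..b}. h t)"
definition imax :: "(real \<Rightarrow> real) \<Rightarrow> real \<Rightarrow> real \<Rightarrow> real" where
  "imax h a b = (SUP t\<in>{a..b}. h t)"
definition iwid :: "(real \<Rightarrow> real) \<Rightarrow> real \<Rightarrow> real \<Rightarrow> real" where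
  "iwid h a b = imax h a b - imin h a b"

definition smin :: "nat \<Rightarrow> (nat \<Rightarrow> real) \<Rightarrow> (nat \<Rightarrow> real) \<Rightarrow> (nat \<Rightarrow> real \<Rightarrow> real) \<Rightarrow> real" where
  "smin n lo hi h = (\<Sum>i<n. imin (h i) (lo i) (hi i))"
definition smax :: "nat \<Rightarrow> (nat \<Rightarrow> real) \<Rightarrow> (nat \<Rightarrow> real) \<Rightarrow> (nat \<Rightarrow> real \<Rightarrow> real) \<Rightarrow> real" where
  "smax n lo hi h = (\<Sum>i<n. imax (h i) (lo i) (hi i))"
definition swid :: "nat \<Rightarrow> (nat \<Rightarrow> real) \<Rightarrow> (nat \<Rightarrow> real) \<Rightarrow> (nat \<Rightarrow> real \<Rightarrow> real) \<Rightarrow> real" where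
  "swid n lo hi h = smax n lo hi h - smin n lo hi h"

definition theta :: "nat \<Rightarrow> (nat \<Rightarrow> real) \<Rightarrow> (nat \<Rightarrow> real) \<Rightarrow> (nat \<Rightarrow> real \<Rightarrow> real) \<Rightarrow> nat \<Rightarrow> real" where
  "theta n lo hi h i = iwid (h i) (lo i) (hi i) / swid n lo hi h"

end

theory Submission imports Defs begin

lemma four_point:
  fixes \<phi> :: "real \<Rightarrow> real"
  assumes conv: "convex_on Z \<phi>" and L: "L \<in> Z" and S: "L + (A + B) \<in> Z" and AB: "0 \<le> A * B"
  shows "\<phi> (L + A) + \<phi> (L + B) \<le> \<phi> L + \<phi> (L + (A + B))"
proof (cases "A + B = 0")
  case True
  then have B: "B = - A" by linarith
  with AB have "A * A \<le> 0" by simp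
  then have "A * A = 0" using zero_le_square[of A] by linarith
  then have "A = 0 \<and> B = 0" using B by simp
  then show ?thesis by simp
next
  case False
  define t where "t = A / (A + B)"
  have AA: "0 \<le> A * (A + B)" using AB zero_le_square[of A] by (simp add: algebra_simps)
  have BB: "0 \<le> B * (A + B)" using AB zero_le_square[of B] by (simp add: algebra_simps)
  have t1: "1 - t = B / (A + B)" using False by (simp add: t_def field_simps)
  have t01: "0 \<le> t \<and> t \<le> 1"
  proof -
    have "0 \<le> t" unfolding t_def using AA by (simp add: zero_le_divide_iff zero_le_mult_iff)
    moreover have "0 \<le> 1 - t" unfolding t1 using BB by (simp add: zero_le_divide_iff zero_le_mult_iff)
    ultimately show ?thesis by simp
  qed
  have tA: "t * (A + B) = A" using False by (simp add: t_def)
  have "(1 - t) *\<^sub>R L + t *\<^sub>R (L + (A + B)) = L + t * (A + B)"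
    by (simp add: algebra_simps)
  then have eA: "L + A = (1 - t) *\<^sub>R L + t *\<^sub>R (L + (A + B))" using tA by simp
  have "(1 - (1 - t)) *\<^sub>R L + (1 - t) *\<^sub>R (L + (A + B)) = L + (A + B) - t * (A + B)"
    by (simp add: algebra_simps)
  then have eB: "L + B = (1 - (1 - t)) *\<^sub>R L + (1 - t) *\<^sub>R (L + (A + B))" using tA by simp
  have 1: "\<phi> (L + A) \<le> (1 - t) * \<phi> L + t * \<phi> (L + (A + B))"
    using convex_onD[OF conv, of t L "L + (A + B)"] t01 L S eA by simp
  have 2: "\<phi> (L + B) \<le> (1 - (1 - t)) * \<phi> L + (1 - t) * \<phi> (L + (A + B))"
    using convex_onD[OF conv, of "1 - t" L "L + (A + B)"] t01 L S eB by simp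
  from 1 2 show ?thesis by (simp add: algebra_simps)
qed

lemma superadd:
  fixes \<phi> :: "real \<Rightarrow> real"
  assumes conv: "convex_on Z \<phi>" and fin: "finite S"
    and sgn: "(\<forall>i\<in>S. a i \<ge> 0) \<or> (\<forall>i\<in>S. a i \<le> 0)"
    and pts: "\<forall>T\<subseteq>S. L + sum a T \<in> Z"
  shows "(\<Sum>i\<in>S. \<phi> (L + a i)) + \<phi> L \<le> \<phi> (L + sum a S) + real (card S) * \<phi> L"
  using fin sgn pts
proof (induction S rule: finite_induct)
  case empty
  then show ?case by simp
next
  case (insert j F)
  have IH: "(\<Sum>i\<in>F. \<phi> (L + a i)) + \<phi> L \<le> \<phi> (L + sum a F) + real (card F) * \<phi> L"
    using insert by auto
  have s: "0 \<le> sum a F * a j"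
    using insert.prems(1)
  proof
    assume h: "\<forall>i\<in>insert j F. 0 \<le> a i"
    then show ?thesis by (simp add: sum_nonneg)
  next
    assume h: "\<forall>i\<in>insert j F. a i \<le> 0"
    then have "sum a F \<le> 0" by (simp add: sum_nonpos)
    then show ?thesis using h by (simp add: mult_nonpos_nonpos)
  qed
  have L: "L \<in> Z" using insert.prems(2)[rule_format, of "{}"] by simp
  have S: "L + (sum a F + a j) \<in> Z" using insert.prems(2)[rule_format, of "insert j F"] insert.hyps
    by (simp add: add.commute)
  have 4: "\<phi> (L + sum a F) + \<phi> (L + a j) \<le> \<phi> L + \<phi> (L + (sum a F + a j))"
    by (rule four_point[OF conv L S s])
  show ?case using IH 4 insert.hyps by (simp add: algebra_simps)
qed

lemma lowcore:
  fixes \<phi> :: "real \<Rightarrow> real"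
  assumes conv: "convex_on Z \<phi>" and fin: "finite S"
    and th: "sum \<theta> S = 1"
    and sgn: "(\<forall>i\<in>S. a i \<ge> 0) \<or> (\<forall>i\<in>S. a i \<le> 0)"
    and pts: "\<forall>T\<subseteq>S. L + sum a T \<in> Z"
  shows "(\<Sum>i\<in>S. \<phi> (L + a i) - (1 - \<theta> i) * \<phi> L) \<le> \<phi> (L + sum a S)"
proof -
  have "(\<Sum>i\<in>S. \<phi> (L + a i) - (1 - \<theta> i) * \<phi> L) = (\<Sum>i\<in>S. \<phi> (L + a i)) - (real (card S) - 1) * \<phi> L"
    using th by (simp add: sum_subtractf left_diff_distrib sum_distrib_right[symmetric])
  then show ?thesis using superadd[OF conv fin sgn pts] by (simp add: algebra_simps)
qed

lemma upcore:
  fixes \<phi> :: "real \<Rightarrow> real"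
  assumes conv: "convex_on Z \<phi>" and fin: "finite S" and ne: "S \<noteq> {}"
    and th: "sum \<theta> S = 1" and pos: "\<forall>i\<in>S. \<theta> i > 0"
    and pts: "\<forall>i\<in>S. a i / \<theta> i + L \<in> Z"
  shows "\<phi> (L + sum a S) \<le> (\<Sum>i\<in>S. \<theta> i * \<phi> (a i / \<theta> i + L))"
proof -
  have "(\<Sum>i\<in>S. \<theta> i *\<^sub>R (a i / \<theta> i + L)) = L + sum a S"
  proof -
    have "(\<Sum>i\<in>S. \<theta> i *\<^sub>R (a i / \<theta> i + L)) = (\<Sum>i\<in>S. a i + \<theta> i * L)"
      using pos by (intro sum.cong) (auto simp: field_simps)
    also have "\<dots> = sum a S + L" using th by (simp add: sum.distrib sum_distrib_right[symmetric])
    finally show ?thesis by simp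
  qed
  with convex_on_sum[OF fin ne conv th, of "\<lambda>i. a i / \<theta> i + L"] pos pts show ?thesis
    by (simp add: less_imp_le)
qed


lemma ivl_facts:
  assumes ab: "a \<le> b" and c: "continuous_on {a..b} h"
  shows "\<forall>t\<in>{a..b}. imin h a b \<le> h t \<and> h t \<le> imax h a b"
    and "\<exists>t\<in>{a..b}. h t = imin h a b"
    and "\<exists>t\<in>{a..b}. h t = imax h a b"
proof -
  obtain x where x: "x \<in> {a..b}" "\<forall>y\<in>{a..b}. h x \<le> h y"
    using continuous_attains_inf[of "{a..b}" h] ab c by auto
  obtain z where z: "z \<in> {a..b}" "\<forall>y\<in>{a..b}. h y \<le> h z"
    using continuous_attains_sup[of "{a..b}" h] ab c by auto
  have 1: "imin h a b = h x" unfolding imin_def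
    by (rule cInf_eq_minimum) (use x in auto)
  have 2: "imax h a b = h z" unfolding imax_def
    by (rule cSup_eq_maximum) (use z in auto)
  show "\<forall>t\<in>{a..b}. imin h a b \<le> h t \<and> h t \<le> imax h a b" using 1 2 x z by auto
  show "\<exists>t\<in>{a..b}. h t = imin h a b" using 1 x by auto
  show "\<exists>t\<in>{a..b}. h t = imax h a b" using 2 z by auto
qed

lemma box_mem: "x \<in> box n lo hi \<Longrightarrow> i < n \<Longrightarrow> x i \<in> {lo i..hi i}"
  unfolding box_def by (auto simp: PiE_iff)

lemma box_build: "(\<forall>i<n. t i \<in> {lo i..hi i}) \<Longrightarrow> (\<lambda>i. if i < n then t i else undefined) \<in> box n lo hi"
  unfolding box_def by (auto simp: PiE_iff extensional_def)

lemma fam: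
  fixes h :: "nat \<Rightarrow> real \<Rightarrow> real"
  assumes box_ok: "\<forall>i<n. lo i \<le> hi i"
    and cont: "\<forall>i<n. continuous_on {lo i..hi i} (h i)"
    and ne: "\<exists>i<n. iwid (h i) (lo i) (hi i) > 0"
    and P_def: "P = {i\<in>{..<n}. 0 < iwid (h i) (lo i) (hi i)}"
  shows "finite P" "P \<noteq> {}" "P \<subseteq> {..<n}" "swid n lo hi h > 0"
    "sum (theta n lo hi h) P = 1" "\<forall>i\<in>P. theta n lo hi h i > 0"
    "\<forall>x\<in>box n lo hi. \<forall>i<n. imin (h i) (lo i) (hi i) \<le> h i (x i) \<and> h i (x i) \<le> imax (h i) (lo i) (hi i)"
    "\<forall>x\<in>box n lo hi. (\<Sum>i<n. h i (x i)) = smin n lo hi h + (\<Sum>i\<in>P. h i (x i) - imin (h i) (lo i) (hi i))"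
    "\<forall>x\<in>box n lo hi. (\<Sum>i<n. h i (x i)) = smax n lo hi h + (\<Sum>i\<in>P. h i (x i) - imax (h i) (lo i) (hi i))"
    "\<exists>x\<in>box n lo hi. (\<Sum>i<n. h i (x i)) = smin n lo hi h"
    "\<exists>x\<in>box n lo hi. (\<Sum>i<n. h i (x i)) = smax n lo hi h"
    "\<forall>x\<in>box n lo hi. \<forall>i\<in>P. 0 \<le> (h i (x i) - imin (h i) (lo i) (hi i)) / theta n lo hi h i
        \<and> (h i (x i) - imin (h i) (lo i) (hi i)) / theta n lo hi h i \<le> swid n lo hi h"
    "\<forall>x\<in>box n lo hi. \<forall>i\<in>P. - swid n lo hi h \<le> (h i (x i) - imax (h i) (lo i) (hi i)) / theta n lo hi h i
        \<and> (h i (x i) - imax (h i) (lo i) (hi i)) / theta n lo hi h i \<le> 0"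
proof -
  note F = ivl_facts[OF box_ok[rule_format] cont[rule_format]]
  show fin: "finite P" and sub: "P \<subseteq> {..<n}" using P_def by auto
  show "P \<noteq> {}" using ne P_def by auto
  have wnn: "\<forall>i<n. iwid (h i) (lo i) (hi i) \<ge> 0"
  proof (intro allI impI)
    fix i assume i: "i < n"
    have "lo i \<in> {lo i..hi i}" using box_ok i by auto
    then show "iwid (h i) (lo i) (hi i) \<ge> 0" using F(1)[OF i i] unfolding iwid_def by force
  qed
  have w0: "\<forall>i<n. i \<notin> P \<longrightarrow> iwid (h i) (lo i) (hi i) = 0"
    using wnn P_def by force
  have sw: "swid n lo hi h = (\<Sum>i\<in>P. iwid (h i) (lo i) (hi i))"
  proof -
    have "swid n lo hi h = (\<Sum>i<n. iwid (h i) (lo i) (hi i))"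
      unfolding swid_def smax_def smin_def iwid_def by (simp add: sum_subtractf)
    also have "\<dots> = (\<Sum>i\<in>P. iwid (h i) (lo i) (hi i))"
      by (rule sum.mono_neutral_right) (use sub w0 in auto)
    finally show ?thesis .
  qed
  show swp: "swid n lo hi h > 0"
    unfolding sw using fin \<open>P \<noteq> {}\<close> P_def by (intro sum_pos) auto
  show "sum (theta n lo hi h) P = 1"
    unfolding theta_def using swp sw by (simp add: sum_divide_distrib[symmetric])
  show thp: "\<forall>i\<in>P. theta n lo hi h i > 0"
    unfolding theta_def using swp P_def by auto
  show bnd: "\<forall>x\<in>box n lo hi. \<forall>i<n. imin (h i) (lo i) (hi i) \<le> h i (x i) \<and> h i (x i) \<le> imax (h i) (lo i) (hi i)"
    using F(1) box_mem by blast
  have constmin: "\<forall>x\<in>box n lo hi. \<forall>i<n. i \<notin> P \<longrightarrow> h i (x i) = imin (h i) (lo i) (hi i)"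
    using bnd w0 unfolding iwid_def by fastforce
  have constmax: "\<forall>x\<in>box n lo hi. \<forall>i<n. i \<notin> P \<longrightarrow> h i (x i) = imax (h i) (lo i) (hi i)"
    using bnd w0 unfolding iwid_def by fastforce
  show "\<forall>x\<in>box n lo hi. (\<Sum>i<n. h i (x i)) = smin n lo hi h + (\<Sum>i\<in>P. h i (x i) - imin (h i) (lo i) (hi i))"
  proof
    fix x assume x: "x \<in> box n lo hi"
    have "(\<Sum>i<n. h i (x i)) - smin n lo hi h = (\<Sum>i<n. h i (x i) - imin (h i) (lo i) (hi i))"
      unfolding smin_def by (simp add: sum_subtractf)
    also have "\<dots> = (\<Sum>i\<in>P. h i (x i) - imin (h i) (lo i) (hi i))"
      by (rule sum.mono_neutral_right) (use sub constmin x in auto)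
    finally show "(\<Sum>i<n. h i (x i)) = smin n lo hi h + (\<Sum>i\<in>P. h i (x i) - imin (h i) (lo i) (hi i))"
      by simp
  qed
  show "\<forall>x\<in>box n lo hi. (\<Sum>i<n. h i (x i)) = smax n lo hi h + (\<Sum>i\<in>P. h i (x i) - imax (h i) (lo i) (hi i))"
  proof
    fix x assume x: "x \<in> box n lo hi"
    have "(\<Sum>i<n. h i (x i)) - smax n lo hi h = (\<Sum>i<n. h i (x i) - imax (h i) (lo i) (hi i))"
      unfolding smax_def by (simp add: sum_subtractf)
    also have "\<dots> = (\<Sum>i\<in>P. h i (x i) - imax (h i) (lo i) (hi i))"
      by (rule sum.mono_neutral_right) (use sub constmax x in auto)
    finally show "(\<Sum>i<n. h i (x i)) = smax n lo hi h + (\<Sum>i\<in>P. h i (x i) - imax (h i) (lo i) (hi i))"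
      by simp
  qed
  show "\<exists>x\<in>box n lo hi. (\<Sum>i<n. h i (x i)) = smin n lo hi h"
  proof -
    have "\<forall>i<n. \<exists>t. t \<in> {lo i..hi i} \<and> h i t = imin (h i) (lo i) (hi i)" using F(2) by blast
    then obtain t where t: "\<forall>i<n. t i \<in> {lo i..hi i} \<and> h i (t i) = imin (h i) (lo i) (hi i)"
      by metis
    show ?thesis
      by (rule bexI[OF _ box_build[of n t lo hi]]) (use t in \<open>auto simp: smin_def\<close>)
  qed
  show "\<exists>x\<in>box n lo hi. (\<Sum>i<n. h i (x i)) = smax n lo hi h"
  proof -
    have "\<forall>i<n. \<exists>t. t \<in> {lo i..hi i} \<and> h i t = imax (h i) (lo i) (hi i)" using F(3) by blast
    then obtain t where t: "\<forall>i<n. t i \<in> {lo i..hi i} \<and> h i (t i) = imax (h i) (lo i) (hi i)"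
      by metis
    show ?thesis
      by (rule bexI[OF _ box_build[of n t lo hi]]) (use t in \<open>auto simp: smax_def\<close>)
  qed
  show "\<forall>x\<in>box n lo hi. \<forall>i\<in>P. 0 \<le> (h i (x i) - imin (h i) (lo i) (hi i)) / theta n lo hi h i
        \<and> (h i (x i) - imin (h i) (lo i) (hi i)) / theta n lo hi h i \<le> swid n lo hi h"
  proof (intro ballI conjI)
    fix x i assume x: "x \<in> box n lo hi" and i: "i \<in> P"
    have w: "iwid (h i) (lo i) (hi i) > 0" and "i < n" using i P_def by auto
    have b: "imin (h i) (lo i) (hi i) \<le> h i (x i)" "h i (x i) \<le> imax (h i) (lo i) (hi i)"
      using bnd x \<open>i < n\<close> by auto
    have eq: "(h i (x i) - imin (h i) (lo i) (hi i)) / theta n lo hi h i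
        = (h i (x i) - imin (h i) (lo i) (hi i)) / iwid (h i) (lo i) (hi i) * swid n lo hi h"
      unfolding theta_def using w swp by (simp add: field_simps)
    have r: "0 \<le> (h i (x i) - imin (h i) (lo i) (hi i)) / iwid (h i) (lo i) (hi i)"
        "(h i (x i) - imin (h i) (lo i) (hi i)) / iwid (h i) (lo i) (hi i) \<le> 1"
      using b w unfolding iwid_def by (auto simp: divide_le_eq_1)
    show "0 \<le> (h i (x i) - imin (h i) (lo i) (hi i)) / theta n lo hi h i"
      unfolding eq using mult_nonneg_nonneg[OF r(1) less_imp_le[OF swp]] by linarith
    show "(h i (x i) - imin (h i) (lo i) (hi i)) / theta n lo hi h i \<le> swid n lo hi h"
      unfolding eq using mult_right_mono[OF r(2) less_imp_le[OF swp]] by linarith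
  qed
  show "\<forall>x\<in>box n lo hi. \<forall>i\<in>P. - swid n lo hi h \<le> (h i (x i) - imax (h i) (lo i) (hi i)) / theta n lo hi h i
        \<and> (h i (x i) - imax (h i) (lo i) (hi i)) / theta n lo hi h i \<le> 0"
  proof (intro ballI conjI)
    fix x i assume x: "x \<in> box n lo hi" and i: "i \<in> P"
    have w: "iwid (h i) (lo i) (hi i) > 0" and "i < n" using i P_def by auto
    have b: "imin (h i) (lo i) (hi i) \<le> h i (x i)" "h i (x i) \<le> imax (h i) (lo i) (hi i)"
      using bnd x \<open>i < n\<close> by auto
    have eq: "(h i (x i) - imax (h i) (lo i) (hi i)) / theta n lo hi h i
        = - ((imax (h i) (lo i) (hi i) - h i (x i)) / iwid (h i) (lo i) (hi i) * swid n lo hi h)"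
      unfolding theta_def using w swp by (simp add: field_simps)
    have r: "0 \<le> (imax (h i) (lo i) (hi i) - h i (x i)) / iwid (h i) (lo i) (hi i)"
        "(imax (h i) (lo i) (hi i) - h i (x i)) / iwid (h i) (lo i) (hi i) \<le> 1"
      using b w unfolding iwid_def by (auto simp: divide_le_eq_1)
    show "- swid n lo hi h \<le> (h i (x i) - imax (h i) (lo i) (hi i)) / theta n lo hi h i"
      unfolding eq using mult_right_mono[OF r(2) less_imp_le[OF swp]] by linarith
    show "(h i (x i) - imax (h i) (lo i) (hi i)) / theta n lo hi h i \<le> 0"
      unfolding eq using mult_nonneg_nonneg[OF r(1) less_imp_le[OF swp]] by linarith
  qed
qed


theorem theorem1:
  fixes n :: nat and lo hi :: "nat \<Rightarrow> real" and g :: "(nat \<Rightarrow> real) \<Rightarrow> real"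
    and gu go :: "nat \<Rightarrow> real \<Rightarrow> real" and \<phi> :: "real \<Rightarrow> real" and Z :: "real set"
  assumes box_ok: "\<forall>i<n. lo i \<le> hi i"
    and relax: "superposition_relaxation n lo hi g gu go"
    and cont: "\<forall>i<n. continuous_on {lo i..hi i} (gu i) \<and> continuous_on {lo i..hi i} (go i)"
    and Pu_ne: "\<exists>i<n. iwid (gu i) (lo i) (hi i) > 0"
    and Po_ne: "\<exists>i<n. iwid (go i) (lo i) (hi i) > 0"
    and Z_int: "is_interval Z"
    and Z_sup: "{smin n lo hi gu .. smax n lo hi go} \<subseteq> Z"
    and conv: "convex_on Z \<phi>"
    and monot: "mono_on Z \<phi> \<or> antimono_on Z \<phi>"
  shows
    "(mono_on Z \<phi> \<longrightarrow>
       superposition_relaxation n lo hi (\<phi> \<circ> g)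
         (\<lambda>i t. if iwid (gu i) (lo i) (hi i) > 0
                then \<phi> (gu i t - imin (gu i) (lo i) (hi i) + smin n lo hi gu)
                     - (1 - theta n lo hi gu i) * \<phi> (smin n lo hi gu)
                else 0)
         (\<lambda>i t. if iwid (go i) (lo i) (hi i) > 0
                then theta n lo hi go i *
                     \<phi> ((go i t - imax (go i) (lo i) (hi i)) / theta n lo hi go i + smax n lo hi go)
                else 0))
   \<and> (antimono_on Z \<phi> \<longrightarrow>
       superposition_relaxation n lo hi (\<phi> \<circ> g)
         (\<lambda>i t. if iwid (go i) (lo i) (hi i) > 0
                then \<phi> (go i t - imax (go i) (lo i) (hi i) + smax n lo hi go)
                     - (1 - theta n lo hi go i) * \<phi> (smax n lo hi go)
                else 0)
         (\<lambda>i t. if iwid (gu i) (lo i) (hi i) > 0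
                then theta n lo hi gu i *
                     \<phi> ((gu i t - imin (gu i) (lo i) (hi i)) / theta n lo hi gu i + smin n lo hi gu)
                else 0))"
proof -
  define Pu where "Pu = {i\<in>{..<n}. 0 < iwid (gu i) (lo i) (hi i)}"
  define Po where "Po = {i\<in>{..<n}. 0 < iwid (go i) (lo i) (hi i)}"
  define Lu where "Lu = smin n lo hi gu"
  define Uu where "Uu = smax n lo hi gu"
  define Lo where "Lo = smin n lo hi go"
  define Uo where "Uo = smax n lo hi go"
  note U = fam[OF box_ok _ Pu_ne Pu_def] and O = fam[OF box_ok _ Po_ne Po_def]
  have cu: "\<forall>i<n. continuous_on {lo i..hi i} (gu i)" and co: "\<forall>i<n. continuous_on {lo i..hi i} (go i)"
    using cont by auto
  note U = U[OF cu] and O = O[OF co]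
  have rel: "\<And>x. x \<in> box n lo hi \<Longrightarrow> (\<Sum>i<n. gu i (x i)) \<le> g x \<and> g x \<le> (\<Sum>i<n. go i (x i))"
    using relax unfolding superposition_relaxation_def by blast
  have LuLo: "Lu \<le> Lo"
  proof -
    obtain x where x: "x \<in> box n lo hi" "(\<Sum>i<n. go i (x i)) = Lo" using O(10) Lo_def by blast
    have "Lu \<le> (\<Sum>i<n. gu i (x i))" unfolding Lu_def smin_def
      using U(7) x(1) by (intro sum_mono) auto
    then show ?thesis using rel[OF x(1)] x(2) by linarith
  qed
  have UuUo: "Uu \<le> Uo"
  proof -
    obtain x where x: "x \<in> box n lo hi" "(\<Sum>i<n. gu i (x i)) = Uu" using U(11) Uu_def by blast
    have "(\<Sum>i<n. go i (x i)) \<le> Uo" unfolding Uo_def smax_def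
      using O(7) x(1) by (intro sum_mono) auto
    then show ?thesis using rel[OF x(1)] x(2) by linarith
  qed
  have swu: "swid n lo hi gu = Uu - Lu" and swo: "swid n lo hi go = Uo - Lo"
    unfolding swid_def Uu_def Lu_def Uo_def Lo_def by auto
  have inZ: "\<And>y. Lu \<le> y \<Longrightarrow> y \<le> Uo \<Longrightarrow> y \<in> Z" using Z_sup Lu_def Uo_def by auto
  have gux: "Lu \<le> (\<Sum>i<n. gu i (x i)) \<and> (\<Sum>i<n. gu i (x i)) \<le> Uu" if x: "x \<in> box n lo hi" for x
    unfolding Lu_def Uu_def smin_def smax_def using U(7) x by (auto intro!: sum_mono)
  have gox: "Lo \<le> (\<Sum>i<n. go i (x i)) \<and> (\<Sum>i<n. go i (x i)) \<le> Uo" if x: "x \<in> box n lo hi" for x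
    unfolding Lo_def Uo_def smin_def smax_def using O(7) x by (auto intro!: sum_mono)
  have sum_if: "\<And>P F. (\<Sum>i<n. if 0 < iwid (P i) (lo i) (hi i) then F i else 0)
      = (\<Sum>i\<in>{i\<in>{..<n}. 0 < iwid (P i) (lo i) (hi i)}. F i)"
    by (rule sum.inter_filter[symmetric]) simp
  have lowU: "(\<Sum>i\<in>Pu. \<phi> (gu i (x i) - imin (gu i) (lo i) (hi i) + Lu) - (1 - theta n lo hi gu i) * \<phi> Lu)
       \<le> \<phi> (\<Sum>i<n. gu i (x i))" if x: "x \<in> box n lo hi" for x
  proof -
    define a where "a i = gu i (x i) - imin (gu i) (lo i) (hi i)" for i
    have ann: "\<forall>i\<in>Pu. a i \<ge> 0" using U(3) U(7) x unfolding a_def by force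
    have pts: "\<forall>T\<subseteq>Pu. Lu + sum a T \<in> Z"
    proof (intro allI impI)
      fix T assume T: "T \<subseteq> Pu"
      have "0 \<le> sum a T" using ann T by (intro sum_nonneg) auto
      moreover have "sum a T \<le> sum a Pu" using ann T U(1) by (intro sum_mono2) auto
      moreover have "(\<Sum>i<n. gu i (x i)) = Lu + sum a Pu" using U(8) x unfolding Lu_def a_def by auto
      ultimately show "Lu + sum a T \<in> Z" using gux[OF x] UuUo by (intro inZ) auto
    qed
    have "(\<Sum>i\<in>Pu. \<phi> (Lu + a i) - (1 - theta n lo hi gu i) * \<phi> Lu) \<le> \<phi> (Lu + sum a Pu)"
      by (rule lowcore[OF conv U(1) U(5)]) (use ann pts in auto)
    moreover have "(\<Sum>i<n. gu i (x i)) = Lu + sum a Pu" using U(8) x unfolding Lu_def a_def by auto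
    ultimately show ?thesis unfolding a_def by (simp add: add.commute)
  qed
  have lowO: "(\<Sum>i\<in>Po. \<phi> (go i (x i) - imax (go i) (lo i) (hi i) + Uo) - (1 - theta n lo hi go i) * \<phi> Uo)
       \<le> \<phi> (\<Sum>i<n. go i (x i))" if x: "x \<in> box n lo hi" for x
  proof -
    define a where "a i = go i (x i) - imax (go i) (lo i) (hi i)" for i
    have ann: "\<forall>i\<in>Po. a i \<le> 0" using O(3) O(7) x unfolding a_def by force
    have pts: "\<forall>T\<subseteq>Po. Uo + sum a T \<in> Z"
    proof (intro allI impI)
      fix T assume T: "T \<subseteq> Po"
      have "sum a T \<le> 0" using ann T by (intro sum_nonpos) auto
      moreover have "sum a Po \<le> sum a T"
      proof -
        have "sum (\<lambda>i. - a i) T \<le> sum (\<lambda>i. - a i) Po" using ann T O(1) by (intro sum_mono2) auto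
        then show ?thesis by (simp add: sum_negf)
      qed
      moreover have "(\<Sum>i<n. go i (x i)) = Uo + sum a Po" using O(9) x unfolding Uo_def a_def by auto
      ultimately show "Uo + sum a T \<in> Z" using gox[OF x] LuLo by (intro inZ) auto
    qed
    have "(\<Sum>i\<in>Po. \<phi> (Uo + a i) - (1 - theta n lo hi go i) * \<phi> Uo) \<le> \<phi> (Uo + sum a Po)"
      by (rule lowcore[OF conv O(1) O(5)]) (use ann pts in auto)
    moreover have "(\<Sum>i<n. go i (x i)) = Uo + sum a Po" using O(9) x unfolding Uo_def a_def by auto
    ultimately show ?thesis unfolding a_def by (simp add: add.commute)
  qed
  have upO: "\<phi> (\<Sum>i<n. go i (x i)) \<le>
      (\<Sum>i\<in>Po. theta n lo hi go i * \<phi> ((go i (x i) - imax (go i) (lo i) (hi i)) / theta n lo hi go i + Uo))"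
    if x: "x \<in> box n lo hi" for x
  proof -
    define a where "a i = go i (x i) - imax (go i) (lo i) (hi i)" for i
    have "\<phi> (Uo + sum a Po) \<le> (\<Sum>i\<in>Po. theta n lo hi go i * \<phi> (a i / theta n lo hi go i + Uo))"
    proof (rule upcore[OF conv O(1) O(2) O(5) O(6)], intro ballI)
      fix i assume i: "i \<in> Po"
      show "a i / theta n lo hi go i + Uo \<in> Z"
        using O(13) x i swo LuLo unfolding a_def by (intro inZ) force+
    qed
    moreover have "(\<Sum>i<n. go i (x i)) = Uo + sum a Po" using O(9) x unfolding Uo_def a_def by auto
    ultimately show ?thesis unfolding a_def by simp
  qed
  have upU: "\<phi> (\<Sum>i<n. gu i (x i)) \<le>
      (\<Sum>i\<in>Pu. theta n lo hi gu i * \<phi> ((gu i (x i) - imin (gu i) (lo i) (hi i)) / theta n lo hi gu i + Lu))"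
    if x: "x \<in> box n lo hi" for x
  proof -
    define a where "a i = gu i (x i) - imin (gu i) (lo i) (hi i)" for i
    have "\<phi> (Lu + sum a Pu) \<le> (\<Sum>i\<in>Pu. theta n lo hi gu i * \<phi> (a i / theta n lo hi gu i + Lu))"
    proof (rule upcore[OF conv U(1) U(2) U(5) U(6)], intro ballI)
      fix i assume i: "i \<in> Pu"
      show "a i / theta n lo hi gu i + Lu \<in> Z"
        using U(12) x i swu UuUo unfolding a_def by (intro inZ) force+
    qed
    moreover have "(\<Sum>i<n. gu i (x i)) = Lu + sum a Pu" using U(8) x unfolding Lu_def a_def by auto
    ultimately show ?thesis unfolding a_def by simp
  qed
  have gZ: "(\<Sum>i<n. gu i (x i)) \<in> Z \<and> g x \<in> Z \<and> (\<Sum>i<n. go i (x i)) \<in> Z" if x: "x \<in> box n lo hi" for x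
    using gux[OF x] gox[OF x] rel[OF x] UuUo LuLo by (auto intro!: inZ)
  show ?thesis
  proof (intro conjI impI)
    assume m: "mono_on Z \<phi>"
    show "superposition_relaxation n lo hi (\<phi> \<circ> g)
         (\<lambda>i t. if iwid (gu i) (lo i) (hi i) > 0
                then \<phi> (gu i t - imin (gu i) (lo i) (hi i) + smin n lo hi gu)
                     - (1 - theta n lo hi gu i) * \<phi> (smin n lo hi gu)
                else 0)
         (\<lambda>i t. if iwid (go i) (lo i) (hi i) > 0
                then theta n lo hi go i *
                     \<phi> ((go i t - imax (go i) (lo i) (hi i)) / theta n lo hi go i + smax n lo hi go)
                else 0)"
      unfolding superposition_relaxation_def
    proof (intro ballI conjI)
      fix x assume x: "x \<in> box n lo hi"
      have m1: "\<phi> (\<Sum>i<n. gu i (x i)) \<le> \<phi> (g x)" "\<phi> (g x) \<le> \<phi> (\<Sum>i<n. go i (x i))"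
        using m gZ[OF x] rel[OF x] by (auto intro: mono_onD)
      show "(\<Sum>i<n. if iwid (gu i) (lo i) (hi i) > 0
                then \<phi> (gu i (x i) - imin (gu i) (lo i) (hi i) + smin n lo hi gu)
                     - (1 - theta n lo hi gu i) * \<phi> (smin n lo hi gu)
                else 0) \<le> (\<phi> \<circ> g) x"
        unfolding sum_if using lowU[OF x] m1 by (simp add: Pu_def Lu_def)
      show "(\<phi> \<circ> g) x \<le> (\<Sum>i<n. if iwid (go i) (lo i) (hi i) > 0
                then theta n lo hi go i *
                     \<phi> ((go i (x i) - imax (go i) (lo i) (hi i)) / theta n lo hi go i + smax n lo hi go)
                else 0)"
        unfolding sum_if using upO[OF x] m1 by (simp add: Po_def Uo_def)
    qed
  next
    assume m: "antimono_on Z \<phi>"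
    show "superposition_relaxation n lo hi (\<phi> \<circ> g)
         (\<lambda>i t. if iwid (go i) (lo i) (hi i) > 0
                then \<phi> (go i t - imax (go i) (lo i) (hi i) + smax n lo hi go)
                     - (1 - theta n lo hi go i) * \<phi> (smax n lo hi go)
                else 0)
         (\<lambda>i t. if iwid (gu i) (lo i) (hi i) > 0
                then theta n lo hi gu i *
                     \<phi> ((gu i t - imin (gu i) (lo i) (hi i)) / theta n lo hi gu i + smin n lo hi gu)
                else 0)"
      unfolding superposition_relaxation_def
    proof (intro ballI conjI)
      fix x assume x: "x \<in> box n lo hi"
      have m1: "\<phi> (g x) \<le> \<phi> (\<Sum>i<n. gu i (x i))" "\<phi> (\<Sum>i<n. go i (x i)) \<le> \<phi> (g x)"
        using m gZ[OF x] rel[OF x] by (auto intro: monotone_onD)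
      show "(\<Sum>i<n. if iwid (go i) (lo i) (hi i) > 0
                then \<phi> (go i (x i) - imax (go i) (lo i) (hi i) + smax n lo hi go)
                     - (1 - theta n lo hi go i) * \<phi> (smax n lo hi go)
                else 0) \<le> (\<phi> \<circ> g) x"
        unfolding sum_if using lowO[OF x] m1 by (simp add: Po_def Uo_def)
      show "(\<phi> \<circ> g) x \<le> (\<Sum>i<n. if iwid (gu i) (lo i) (hi i) > 0
                then theta n lo hi gu i *
                     \<phi> ((gu i (x i) - imin (gu i) (lo i) (hi i)) / theta n lo hi gu i + smin n lo hi gu)
                else 0)"
        unfolding sum_if using upU[OF x] m1 by (simp add: Pu_def Lu_def)
    qed
  qed
qed

end
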